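(* For all $Y_2>Y_1\ge1$, $$\int_{\substack{\mathbf{y}\in\mathbb{R}^4\\ Y_1\le|\mathbf{y}|<Y_2}}\frac{d\mathbf{y}}{|\mathbf{y}|^2\max(|Q_1(\mathbf{y})|,|Q_2(\mathbf{y})|)}=\tau_\infty\log\Big(\frac{Y_2}{Y_1}\Big).$$
   Context: $L_i(x_1,x_2)=a_ix_1+b_ix_2\in\mathbb{Z}[x_1,x_2]$ ($1\le i\le4$) with $\gcd(a_i,b_i)=1$, pairwise non-proportional; $Q_1(\mathbf{y})=\sum a_iy_i^2$, $Q_2(\mathbf{y})=-\sum b_iy_i^2$, and the curve $Q_1=Q_2=0$ in $\mathbb{P}^3$ has no real points. $|\cdot|$ is the sup norm, $\mathrm{e}(t)=e^{2\pi it}$, and $$\tau_\infty=\int_{-\infty}^{\infty}\int_{[-1,1]^6}\mathrm{e}\Big(\theta\sum_{i=1}^4L_i(\mathbf{x})y_i^2\Big)\,d\mathbf{x}\,d\mathbf{y}\,d\theta.$$ *)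

theory Defs
  imports "HOL-Analysis.Analysis" "HOL-Library.Numeral_Type"
begin

definition supnorm4 :: "real^4 \<Rightarrow> real" where
  "supnorm4 y = (MAX i\<in>UNIV. \<bar>y $ i\<bar>)"

definition ee :: "real \<Rightarrow> complex" where
  "ee t = exp (2 * of_real pi * \<i> * of_real t)"

definition Q1 :: "(4 \<Rightarrow> int) \<Rightarrow> real^4 \<Rightarrow> real" where
  "Q1 a y = (\<Sum>i\<in>UNIV. of_int (a i) * (y $ i)^2)"

definition Q2 :: "(4 \<Rightarrow> int) \<Rightarrow> real^4 \<Rightarrow> real" where
  "Q2 b y = - (\<Sum>i\<in>UNIV. of_int (b i) * (y $ i)^2)"

definition Lform :: "(4 \<Rightarrow> int) \<Rightarrow> (4 \<Rightarrow> int) \<Rightarrow> 4 \<Rightarrow> real \<Rightarrow> real \<Rightarrow> real" where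
  "Lform a b i x1 x2 = of_int (a i) * x1 + of_int (b i) * x2"

definition tau_inner :: "(4 \<Rightarrow> int) \<Rightarrow> (4 \<Rightarrow> int) \<Rightarrow> real \<Rightarrow> complex" where
  "tau_inner a b \<theta> =
     integral (cbox (-1, -1, -One) (1, 1, One))
       (\<lambda>(x1::real, x2::real, y::real^4).
          ee (\<theta> * (\<Sum>i\<in>UNIV. Lform a b i x1 x2 * (y $ i)^2)))"

text \<open>tau_infinity: the outer integral over theta in R (Henstock-Kurzweil integral over UNIV,
  which includes improper integrals).\<close>
definition tau_infty :: "(4 \<Rightarrow> int) \<Rightarrow> (4 \<Rightarrow> int) \<Rightarrow> complex" where
  "tau_infty a b = integral (UNIV :: real set) (tau_inner a b)"

end

theory Submission
  imports Defs "HOL-Probability.Sinc_Integral"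
begin


definition sc :: "real \<Rightarrow> real" where "sc x = (if x = 0 then 1 else sin x / x)"

lemma sc_neg[simp]: "sc (-x) = sc x" by (simp add: sc_def)
lemma isCont_sc: "isCont sc x" using isCont_sinc[of x] by (simp add: sc_def[abs_def])
lemma continuous_on_sc[continuous_intros]: "continuous_on S f \<Longrightarrow> continuous_on S (\<lambda>x. sc (f x))"
  using continuous_on_sinc[of S f] by (simp add: sc_def[abs_def])
lemma isCont_Si': "isCont Si x" by (rule isCont_Si)
lemma continuous_on_Si[continuous_intros]: "continuous_on S f \<Longrightarrow> continuous_on S (\<lambda>x. Si (f x))"
  using continuous_on_compose[of S f Si, OF _ continuous_at_imp_continuous_on]
  by (auto simp: isCont_Si o_def)
lemma DERIV_Si_sc: "(Si has_real_derivative sc x) (at x)"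
  using DERIV_Si[of x] by (simp add: sc_def)
lemma DERIV_Si_chain[derivative_intros]:
  "(f has_real_derivative f') (at x within s) \<Longrightarrow> ((\<lambda>x. Si (f x)) has_real_derivative sc (f x) * f') (at x within s)"
  using DERIV_chain2[OF DERIV_Si_sc] by blast

lemma Si_0[simp]: "Si 0 = 0" unfolding Si_def by (metis interval_integral_endpoints_same zero_ereal_def)

lemma sc_le1: "\<bar>sc x\<bar> \<le> 1"
  using abs_sin_x_le_abs_x[of x] by (auto simp: sc_def abs_divide divide_le_eq_1)
lemma sc_le_inv: "x \<noteq> 0 \<Longrightarrow> \<bar>sc x\<bar> \<le> 1 / \<bar>x\<bar>"
  using abs_sin_le_one[of x] by (auto simp: sc_def abs_divide divide_right_mono)
lemma sc_mult: "x \<noteq> 0 \<Longrightarrow> sc (c * x) * c = sin (c * x) / x"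
  by (auto simp: sc_def)

definition SiB :: real where "SiB = (SOME B. \<forall>T. \<bar>Si T\<bar> \<le> B)"
lemma SiB: "\<bar>Si T\<bar> \<le> SiB"
  using someI_ex[OF bounded_Si] unfolding SiB_def by blast
lemma SiB_nonneg: "0 \<le> SiB" using SiB[of 0] by simp

definition Gf :: "real \<Rightarrow> real \<Rightarrow> real \<Rightarrow> real" where
  "Gf a b t = (if a = 0 then 4 / b * Si (b*t) else
     4/(a*b) * (- b * sin (a*t) * sc (b*t) + (a+b)/2 * Si ((a+b)*t) + (a-b)/2 * Si ((b-a)*t)))"

lemma Gf_0: "Gf a b 0 = 0" by (simp add: Gf_def)

lemma Gf_cont: "0 < b \<Longrightarrow> continuous_on S (Gf a b)"
  unfolding Gf_def by (cases "a = 0") (auto intro!: continuous_intros)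

lemma Gf_deriv:
  assumes "0 \<le> a" "a \<le> b" "0 < b" "0 < x"
  shows "(Gf a b has_real_derivative 4 * sc (a*x) * sc (b*x)) (at x)"
proof (cases "a = 0")
  case True
  have "((\<lambda>t. 4 / b * Si (b*t)) has_real_derivative 4 / b * (sc (b*x) * b)) (at x)"
    by (auto intro!: derivative_eq_intros)
  moreover have "Gf a b = (\<lambda>t. 4 / b * Si (b*t))" using True by (auto simp: Gf_def fun_eq_iff)
  ultimately show ?thesis using True assms by (simp add: sc_def)
next
  case False
  then have a: "0 < a" using assms by auto
  define F where "F t = 4/(a*b) * (- (sin (a*t) * sin (b*t) / t) + (a+b)/2 * Si ((a+b)*t) + (a-b)/2 * Si ((b-a)*t))" for t
  have eq: "F t = Gf a b t" if "t \<in> {0<..}" for t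
    using that a assms by (simp add: F_def Gf_def sc_def)
  have "(F has_real_derivative 4/(a*b) * (- ((a * cos (a*x) * sin (b*x) + sin (a*x) * (b * cos (b*x))) * x - sin (a*x) * sin (b*x)) / x^2
        + (a+b)/2 * (sc ((a+b)*x) * (a+b)) + (a-b)/2 * (sc ((b-a)*x) * (b-a)))) (at x)"
    unfolding F_def using assms a
    apply (auto intro!: derivative_eq_intros simp: power2_eq_square)
    apply (auto simp: field_simps)
    done
  moreover have "4/(a*b) * (- ((a * cos (a*x) * sin (b*x) + sin (a*x) * (b * cos (b*x))) * x - sin (a*x) * sin (b*x)) / x^2
        + (a+b)/2 * (sc ((a+b)*x) * (a+b)) + (a-b)/2 * (sc ((b-a)*x) * (b-a))) = 4 * sc (a*x) * sc (b*x)"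
  proof -
    have x0: "x \<noteq> 0" using assms by auto
    have "4/(a*b) * (- ((a * cos (a*x) * sin (b*x) + sin (a*x) * (b * cos (b*x))) * x - sin (a*x) * sin (b*x)) / x^2
        + (a+b)/2 * (sin ((a+b)*x) / x) + (a-b)/2 * (sin ((b-a)*x)/x)) = 4 * (sin (a*x) / (a*x)) * (sin (b*x) / (b*x))"
      using x0 a assms by (simp add: distrib_right left_diff_distrib sin_add sin_diff field_simps power2_eq_square)
    then show ?thesis using x0 a assms by (simp only: sc_mult[OF x0]) (simp add: sc_def)
  qed
  ultimately have "(F has_real_derivative 4 * sc (a*x) * sc (b*x)) (at x)" by simp
  then show ?thesis
    by (rule has_field_derivative_transform_within_open[of _ _ _ "{0<..}"]) (use assms eq in auto)
qed

lemma Gf_int: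
  assumes "0 \<le> a" "a \<le> b" "0 < b" "0 \<le> t"
  shows "((\<lambda>\<theta>. 4 * sc (a*\<theta>) * sc (b*\<theta>)) has_integral Gf a b t) {0..t}"
proof -
  have "((\<lambda>\<theta>. 4 * sc (a*\<theta>) * sc (b*\<theta>)) has_integral Gf a b t - Gf a b 0) {0..t}"
    by (rule fundamental_theorem_of_calculus_interior)
       (use assms Gf_deriv in \<open>auto simp: Gf_cont has_real_derivative_iff_has_vector_derivative[symmetric]\<close>)
  then show ?thesis by (simp add: Gf_0)
qed


lemma Si_diff_bound:
  assumes "0 < d" "d \<le> s" "0 < t"
  shows "\<bar>Si (s*t) - Si (d*t)\<bar> \<le> (s - d) / d"
proof (cases "d = s")
  case True then show ?thesis by simp
next
  case False
  then have lt: "d*t < s*t" using assms by auto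
  obtain z where z: "d*t < z" "z < s*t" "Si (s*t) - Si (d*t) = (s*t - d*t) * sc z"
    using MVT2[OF lt, of Si sc] DERIV_Si_sc by blast
  have z0: "z > 0" using z assms by (meson mult_pos_pos order.strict_trans)
  have "\<bar>sc z\<bar> \<le> 1 / z" using sc_le_inv[of z] z0 by simp
  also have "\<dots> \<le> 1 / (d*t)" using z z0 assms by (intro divide_left_mono) auto
  finally have "(s*t - d*t) * \<bar>sc z\<bar> \<le> (s*t - d*t) * (1/(d*t))"
    using lt by (intro mult_left_mono) auto
  then have "\<bar>Si (s*t) - Si (d*t)\<bar> \<le> (s*t - d*t) * (1/(d*t))"
    using z lt by (simp add: abs_mult)
  also have "\<dots> = (s - d) / d" using assms by (simp add: field_simps)
  finally show ?thesis .
qed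

lemma Gf_bound:
  assumes "0 \<le> a" "a \<le> b" "0 < b" "0 \<le> t"
  shows "\<bar>Gf a b t\<bar> \<le> (12 + 12 * SiB) / b"
proof (cases "a = 0")
  case True
  have "\<bar>Gf a b t\<bar> = 4 / b * \<bar>Si (b*t)\<bar>" using True assms by (simp add: Gf_def abs_mult)
  also have "\<dots> \<le> 4 / b * SiB" using SiB assms by (intro mult_left_mono) auto
  also have "\<dots> \<le> (12 + 12 * SiB) / b" using SiB_nonneg assms by (simp add: divide_right_mono)
  finally show ?thesis .
next
  case False
  then have a: "0 < a" using assms by auto
  define T1 where "T1 = - b * sin (a*t) * sc (b*t)"
  define P where "P = a/2 * (Si ((a+b)*t) + Si ((b-a)*t))"
  define D where "D = b/2 * (Si ((a+b)*t) - Si ((b-a)*t))"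
  have X: "- b * sin (a*t) * sc (b*t) + (a+b)/2 * Si ((a+b)*t) + (a-b)/2 * Si ((b-a)*t) = T1 + P + D"
    by (simp add: T1_def P_def D_def field_simps)
  have G: "Gf a b t = 4/(a*b) * (T1 + P + D)"
    using a by (simp only: Gf_def X if_False) simp
  have T1: "\<bar>T1\<bar> \<le> a"
  proof (cases "t = 0")
    case True then show ?thesis using a by (simp add: T1_def)
  next
    case False
    then have t: "0 < t" using assms by auto
    have "b * sc (b*t) = sin (b*t) / t" using sc_mult[of t b] t by (simp add: mult.commute)
    have "\<bar>T1\<bar> = \<bar>sin (a*t)\<bar> * \<bar>b * sc (b*t)\<bar>" by (simp add: T1_def abs_mult)
    also have "\<dots> = \<bar>sin (a*t)\<bar> * (\<bar>sin (b*t)\<bar> / t)"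
      using t \<open>b * sc (b*t) = sin (b*t) / t\<close> by (simp add: abs_divide)
    also have "\<dots> \<le> (a*t) * (1 / t)"
      using abs_sin_x_le_abs_x[of "a*t"] abs_sin_le_one[of "b*t"] a t
      by (intro mult_mono divide_right_mono) (auto simp: abs_mult)
    also have "\<dots> = a" using t by simp
    finally show ?thesis .
  qed
  have P: "\<bar>P\<bar> \<le> a * SiB"
  proof -
    have "\<bar>P\<bar> = a/2 * \<bar>Si ((a+b)*t) + Si ((b-a)*t)\<bar>" using a by (simp add: P_def abs_mult)
    also have "\<dots> \<le> a/2 * (SiB + SiB)" using a SiB[of "(a+b)*t"] SiB[of "(b-a)*t"]
      by (intro mult_left_mono) (auto intro: order_trans[OF abs_triangle_ineq])
    finally show ?thesis by simp
  qed
  have D: "\<bar>D\<bar> \<le> 2 * a * SiB + 2 * a"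
  proof (cases "b \<le> 2 * a")
    case True
    have "\<bar>D\<bar> = b/2 * \<bar>Si ((a+b)*t) - Si ((b-a)*t)\<bar>" using assms by (simp add: D_def abs_mult)
    also have "\<dots> \<le> b/2 * (SiB + SiB)" using assms SiB[of "(a+b)*t"] SiB[of "(b-a)*t"]
      by (intro mult_left_mono) (auto intro: order_trans[OF abs_triangle_ineq4])
    also have "\<dots> \<le> 2 * a * SiB" using True SiB_nonneg by (simp add: mult_right_mono)
    finally show ?thesis using a by simp
  next
    case False
    show ?thesis
    proof (cases "t = 0")
      case True then show ?thesis using a SiB_nonneg by (simp add: D_def)
    next
      case t0: False
      then have t: "0 < t" using assms by auto
      have "\<bar>Si ((a+b)*t) - Si ((b-a)*t)\<bar> \<le> ((a+b) - (b-a)) / (b-a)"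
        using False a by (intro Si_diff_bound t) auto
      also have "\<dots> \<le> 4 * a / b" using False a assms by (simp add: field_simps)
      finally have "b/2 * \<bar>Si ((a+b)*t) - Si ((b-a)*t)\<bar> \<le> b/2 * (4*a/b)"
        using assms by (intro mult_left_mono) auto
      moreover have "\<bar>D\<bar> = b/2 * \<bar>Si ((a+b)*t) - Si ((b-a)*t)\<bar>" using assms by (simp add: D_def abs_mult)
      moreover have "b/2 * (4*a/b) = 2 * a" using assms by simp
      moreover have "0 \<le> 2*a*SiB" using a SiB_nonneg by simp
      ultimately show ?thesis by linarith
    qed
  qed
  have "\<bar>Gf a b t\<bar> \<le> 4/(a*b) * (a + a*SiB + (2*a*SiB + 2*a))"
  proof -
    have "\<bar>T1 + P + D\<bar> \<le> a + a*SiB + (2*a*SiB + 2*a)" using T1 P D by linarith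
    then have "4/(a*b) * \<bar>T1 + P + D\<bar> \<le> 4/(a*b) * (a + a*SiB + (2*a*SiB + 2*a))"
      using a assms by (intro mult_left_mono) auto
    moreover have "\<bar>Gf a b t\<bar> = 4/(a*b) * \<bar>T1 + P + D\<bar>" unfolding G using a assms
      by (simp only: abs_mult) simp
    ultimately show ?thesis by simp
  qed
  also have "\<dots> = (12 + 12 * SiB) / b" using a assms by (simp add: field_simps)
  finally show ?thesis .
qed

lemma Si_scaled_lim: "0 < c \<Longrightarrow> ((\<lambda>t. Si (c*t)) \<longlongrightarrow> pi/2) at_top"
  by (rule filterlim_compose[OF Si_at_top])
     (rule filterlim_tendsto_pos_mult_at_top[OF tendsto_const _ filterlim_ident])

lemma Gf_lim:
  assumes "0 \<le> a" "a \<le> b" "0 < b"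
  shows "(Gf a b \<longlongrightarrow> 2*pi/b) at_top"
proof (cases "a = 0")
  case True
  have "((\<lambda>t. 4/b * Si (b*t)) \<longlongrightarrow> 4/b * (pi/2)) at_top"
    by (intro tendsto_intros Si_scaled_lim assms)
  moreover have "Gf a b = (\<lambda>t. 4/b * Si (b*t))" using True by (auto simp: Gf_def fun_eq_iff)
  ultimately show ?thesis by simp
next
  case False
  then have a: "0 < a" using assms by auto
  have T1: "((\<lambda>t. - b * sin (a*t) * sc (b*t)) \<longlongrightarrow> 0) at_top"
  proof (rule Lim_null_comparison)
    show "\<forall>\<^sub>F t::real in at_top. norm (- b * sin (a*t) * sc (b*t)) \<le> 1 / t"
      using eventually_gt_at_top[of 0]
    proof eventually_elim
      case (elim t)
      have "b * sc (b*t) = sin (b*t) / t" using sc_mult[of t b] elim by (simp add: mult.commute)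
      have "norm (- b * sin (a*t) * sc (b*t)) = \<bar>sin (a*t)\<bar> * \<bar>b * sc (b*t)\<bar>"
        by (simp add: abs_mult)
      also have "\<dots> = \<bar>sin (a*t)\<bar> * (\<bar>sin (b*t)\<bar> / t)"
        using elim \<open>b * sc (b*t) = sin (b*t) / t\<close> by (simp add: abs_divide)
      finally have "norm (- b * sin (a*t) * sc (b*t)) = \<bar>sin (a*t)\<bar> * (\<bar>sin (b*t)\<bar> / t)" .
      also have "\<dots> \<le> 1 * (1 / t)" using elim
        by (intro mult_mono divide_right_mono) auto
      finally show ?case by simp
    qed
    show "((\<lambda>t::real. 1 / t) \<longlongrightarrow> 0) at_top"
      using tendsto_divide_0[OF tendsto_const filterlim_at_top_imp_at_infinity[OF filterlim_ident], of 1] by simp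
  qed
  have lim2: "((\<lambda>t. (a-b)/2 * Si ((b-a)*t)) \<longlongrightarrow> (a-b)/2 * (pi/2)) at_top"
  proof (cases "a = b")
    case True then show ?thesis by simp
  next
    case False then show ?thesis using assms by (intro tendsto_intros Si_scaled_lim) auto
  qed
  have "((\<lambda>t. 4/(a*b) * (- b * sin (a*t) * sc (b*t) + (a+b)/2 * Si ((a+b)*t) + (a-b)/2 * Si ((b-a)*t)))
        \<longlongrightarrow> 4/(a*b) * (0 + (a+b)/2 * (pi/2) + (a-b)/2 * (pi/2))) at_top"
    using assms a by (intro tendsto_intros T1 lim2 Si_scaled_lim) auto
  moreover have "Gf a b = (\<lambda>t. 4/(a*b) * (- b * sin (a*t) * sc (b*t) + (a+b)/2 * Si ((a+b)*t) + (a-b)/2 * Si ((b-a)*t)))"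
    using a by (auto simp: Gf_def fun_eq_iff)
  moreover have "4/(a*b) * (0 + (a+b)/2 * (pi/2) + (a-b)/2 * (pi/2)) = 2*pi/b"
    using a assms by (simp add: field_simps)
  ultimately show ?thesis by simp
qed


definition ker :: "real \<Rightarrow> real \<Rightarrow> real \<Rightarrow> real" where
  "ker A B \<theta> = 4 * sc (2*pi*(\<theta>*A)) * sc (2*pi*(\<theta>*B))"

definition Kf :: "real \<Rightarrow> real \<Rightarrow> real \<Rightarrow> real" where
  "Kf A B t = (if \<bar>A\<bar> \<le> \<bar>B\<bar> then Gf (2*pi*\<bar>A\<bar>) (2*pi*\<bar>B\<bar>) t else Gf (2*pi*\<bar>B\<bar>) (2*pi*\<bar>A\<bar>) t)"

lemma sc_abs: "sc (2*pi*(\<theta>*A)) = sc ((2*pi*\<bar>A\<bar>)*\<theta>)"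
proof (cases "A \<ge> 0")
  case True then show ?thesis by (simp add: mult_ac)
next
  case False
  then have "2*pi*(\<theta>*A) = - ((2*pi*\<bar>A\<bar>)*\<theta>)" by simp
  then show ?thesis by (metis sc_neg)
qed

lemma ker_even: "ker A B (-\<theta>) = ker A B \<theta>"
  unfolding ker_def by (metis minus_mult_left minus_mult_right sc_neg)


lemma Kf_int:
  assumes "max \<bar>A\<bar> \<bar>B\<bar> > 0" "0 \<le> t"
  shows "(ker A B has_integral Kf A B t) {0..t}"
proof (cases "\<bar>A\<bar> \<le> \<bar>B\<bar>")
  case True
  have "((\<lambda>\<theta>. 4 * sc ((2*pi*\<bar>A\<bar>)*\<theta>) * sc ((2*pi*\<bar>B\<bar>)*\<theta>)) has_integral Gf (2*pi*\<bar>A\<bar>) (2*pi*\<bar>B\<bar>) t) {0..t}"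
    using True assms by (intro Gf_int) (auto simp: max_def)
  then show ?thesis using True by (simp add: ker_def[abs_def] Kf_def sc_abs)
next
  case False
  have "((\<lambda>\<theta>. 4 * sc ((2*pi*\<bar>B\<bar>)*\<theta>) * sc ((2*pi*\<bar>A\<bar>)*\<theta>)) has_integral Gf (2*pi*\<bar>B\<bar>) (2*pi*\<bar>A\<bar>) t) {0..t}"
    using False assms by (intro Gf_int) (auto simp: max_def)
  moreover have "ker A B = (\<lambda>\<theta>. 4 * sc ((2*pi*\<bar>B\<bar>)*\<theta>) * sc ((2*pi*\<bar>A\<bar>)*\<theta>))"
    by (simp add: ker_def fun_eq_iff sc_abs)
  ultimately show ?thesis using False by (simp add: Kf_def)
qed

lemma Kf_bound:
  assumes "max \<bar>A\<bar> \<bar>B\<bar> > 0" "0 \<le> t"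
  shows "\<bar>Kf A B t\<bar> \<le> (12 + 12 * SiB) / (2*pi) * (1 / max \<bar>A\<bar> \<bar>B\<bar>)"
proof (cases "\<bar>A\<bar> \<le> \<bar>B\<bar>")
  case True
  have "\<bar>Gf (2*pi*\<bar>A\<bar>) (2*pi*\<bar>B\<bar>) t\<bar> \<le> (12 + 12 * SiB) / (2*pi*\<bar>B\<bar>)"
    using True assms by (intro Gf_bound) (auto simp: max_def)
  then show ?thesis using True by (simp add: Kf_def max_def)
next
  case False
  have "\<bar>Gf (2*pi*\<bar>B\<bar>) (2*pi*\<bar>A\<bar>) t\<bar> \<le> (12 + 12 * SiB) / (2*pi*\<bar>A\<bar>)"
    using False assms by (intro Gf_bound) (auto simp: max_def)
  then show ?thesis using False by (simp add: Kf_def max_def)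
qed

lemma Kf_lim:
  assumes "max \<bar>A\<bar> \<bar>B\<bar> > 0"
  shows "(Kf A B \<longlongrightarrow> 1 / max \<bar>A\<bar> \<bar>B\<bar>) at_top"
proof (cases "\<bar>A\<bar> \<le> \<bar>B\<bar>")
  case True
  have "(Gf (2*pi*\<bar>A\<bar>) (2*pi*\<bar>B\<bar>) \<longlongrightarrow> 2*pi/(2*pi*\<bar>B\<bar>)) at_top"
    using True assms by (intro Gf_lim) (auto simp: max_def)
  then show ?thesis using True by (simp add: Kf_def[abs_def] max_def)
next
  case False
  have "(Gf (2*pi*\<bar>B\<bar>) (2*pi*\<bar>A\<bar>) \<longlongrightarrow> 2*pi/(2*pi*\<bar>A\<bar>)) at_top"
    using False assms by (intro Gf_lim) (auto simp: max_def)
  then show ?thesis using False by (simp add: Kf_def[abs_def] max_def)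
qed


lemma has_vector_derivative_iexp':
  "((\<lambda>x. exp (\<i> * complex_of_real x)) has_vector_derivative \<i> * exp (\<i> * complex_of_real x)) (at x within s)"
  by (auto intro!: derivative_eq_intros simp: Re_exp Im_exp has_vector_derivative_complex_iff)

lemma ee_iexp: "ee t = exp (\<i> * complex_of_real (2*pi*t))"
  unfolding ee_def by (simp add: mult_ac)

lemma ee_add: "ee (s + t) = ee s * ee t"
  unfolding ee_def by (simp add: distrib_left exp_add)

lemma ee_int:
  "((\<lambda>x. ee (c*x)) has_integral complex_of_real (2 * sc (2*pi*c))) {-1..1}"
proof (cases "c = 0")
  case True
  then show ?thesis using has_integral_const_real[of "1::complex" "-1" 1] by (simp add: ee_def sc_def scaleR_conv_of_real)
next
  case False
  define k where "k = 2*pi*c"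
  have k: "k \<noteq> 0" using False by (simp add: k_def)
  define F where "F x = (- \<i> / complex_of_real k) * exp (\<i> * complex_of_real (k*x))" for x
  have "(F has_vector_derivative ee (c*x)) (at x within {-1..1})" for x
  proof -
    have d1: "((\<lambda>x. k*x) has_vector_derivative k) (at x within {-1..1})"
      unfolding has_real_derivative_iff_has_vector_derivative[symmetric]
      by (auto intro!: derivative_eq_intros)
    have "((\<lambda>x. exp (\<i> * complex_of_real x)) \<circ> (\<lambda>x. k*x) has_vector_derivative k *\<^sub>R (\<i> * exp (\<i> * complex_of_real (k*x)))) (at x within {-1..1})"
      by (rule vector_diff_chain_within[OF d1]) (rule has_vector_derivative_iexp')
    then have "(F has_vector_derivative (- \<i> / complex_of_real k) * (k *\<^sub>R (\<i> * exp (\<i> * complex_of_real (k*x))))) (at x within {-1..1})"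
      unfolding F_def o_def by (rule has_vector_derivative_mult_right)
    moreover have "(- \<i> / complex_of_real k) * (k *\<^sub>R (\<i> * exp (\<i> * complex_of_real (k*x)))) = ee (c*x)"
      using k by (simp add: ee_iexp k_def scaleR_conv_of_real mult_ac)
    ultimately show ?thesis by simp
  qed
  then have "((\<lambda>x. ee (c*x)) has_integral F 1 - F (-1)) {-1..1}"
    by (intro fundamental_theorem_of_calculus) auto
  moreover have "F 1 - F (-1) = complex_of_real (2 * sc (2*pi*c))"
  proof -
    have "F 1 - F (-1) = (- \<i> / complex_of_real k) * (cis k - cis (-k))"
      by (simp add: F_def cis_conv_exp right_diff_distrib)
    also have "cis k - cis (-k) = 2 * \<i> * complex_of_real (sin k)"
      by (simp add: complex_eq_iff cis.sel)
    also have "(- \<i> / complex_of_real k) * (2 * \<i> * complex_of_real (sin k)) = complex_of_real (2 * sin k / k)"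
      using k by (simp add: field_simps)
    also have "2 * sin k / k = 2 * sc (2*pi*c)" using k by (simp add: sc_def k_def)
    finally show ?thesis .
  qed
  ultimately show ?thesis by simp
qed


definition Bv :: "(4 \<Rightarrow> int) \<Rightarrow> real^4 \<Rightarrow> real" where
  "Bv b y = (\<Sum>i\<in>UNIV. of_int (b i) * (y $ i)^2)"

lemma Q2_Bv: "Q2 b y = - Bv b y" by (simp add: Q2_def Bv_def)

lemma cont_Q1[continuous_intros]: "continuous_on S f \<Longrightarrow> continuous_on S (\<lambda>x. Q1 a (f x))"
  unfolding Q1_def by (intro continuous_intros)
lemma cont_Bv[continuous_intros]: "continuous_on S f \<Longrightarrow> continuous_on S (\<lambda>x. Bv b (f x))"
  unfolding Bv_def by (intro continuous_intros)
lemma cont_ee[continuous_intros]: "continuous_on S f \<Longrightarrow> continuous_on S (\<lambda>x. ee (f x))"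
  unfolding ee_def by (intro continuous_intros)

lemma sumL: "(\<Sum>i\<in>UNIV. Lform a b i x1 x2 * (y $ i)^2) = x1 * Q1 a y + x2 * Bv b y"
  unfolding Lform_def Q1_def Bv_def sum_distrib_left sum.distrib[symmetric]
  by (rule sum.cong) (auto simp: algebra_simps)

lemma tau_inner_eq:
  "tau_inner a b \<theta> = integral (cbox (-One) One) (\<lambda>y::real^4. complex_of_real (ker (Q1 a y) (Bv b y) \<theta>))"
proof -
  define \<phi> where "\<phi> x1 x2 y = ee ((\<theta> * Q1 a y) * x1) * ee ((\<theta> * Bv b y) * x2)" for x1 x2 :: real and y :: "real^4"
  have f: "(\<lambda>(x1::real, x2::real, y::real^4). ee (\<theta> * (\<Sum>i\<in>UNIV. Lform a b i x1 x2 * (y $ i)^2)))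
        = (\<lambda>(x1, p). (\<lambda>(x2,y). \<phi> x1 x2 y) p)"
    by (auto simp: fun_eq_iff sumL \<phi>_def distrib_left ee_add[symmetric] mult_ac)
  have cphi: "continuous_on UNIV (\<lambda>(x1, p). (\<lambda>(x2,y). \<phi> x1 x2 y) p)"
    unfolding \<phi>_def by (auto simp: case_prod_beta intro!: continuous_intros)
  have "tau_inner a b \<theta> = integral (cbox (-1) 1) (\<lambda>x1. integral (cbox (-1, -One) (1, One)) (\<lambda>(x2,y). \<phi> x1 x2 y))"
    unfolding tau_inner_def f
    by (subst integral_prod_continuous) (auto intro: continuous_on_subset[OF cphi])
  also have "\<dots> = integral (cbox (-1) 1) (\<lambda>x1. integral (cbox (-One) One) (\<lambda>y. ee ((\<theta> * Q1 a y) * x1) * complex_of_real (2 * sc (2*pi*(\<theta> * Bv b y)))))"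
  proof (rule integral_cong)
    fix x1 :: real
    have c2: "continuous_on UNIV (\<lambda>(x2, y). \<phi> x1 x2 y)"
      unfolding \<phi>_def by (auto simp: case_prod_beta intro!: continuous_intros)
    have "integral (cbox (-1, -One) (1, One)) (\<lambda>(x2,y). \<phi> x1 x2 y)
        = integral (cbox (-1) 1) (\<lambda>x2. integral (cbox (-One) One) (\<lambda>y. \<phi> x1 x2 y))"
      by (subst integral_prod_continuous) (auto intro: continuous_on_subset[OF c2])
    also have "\<dots> = integral (cbox (-One) One) (\<lambda>y. integral (cbox (-1) 1) (\<lambda>x2. \<phi> x1 x2 y))"
      by (rule integral_swap_continuous) (auto intro: continuous_on_subset[OF c2])
    also have "\<dots> = integral (cbox (-One) One) (\<lambda>y. ee ((\<theta> * Q1 a y) * x1) * complex_of_real (2 * sc (2*pi*(\<theta> * Bv b y))))"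
    proof (rule integral_cong)
      fix y
      have "integral (cbox (-1) 1) (\<lambda>x2. \<phi> x1 x2 y) = ee ((\<theta> * Q1 a y) * x1) * integral {-1..1} (\<lambda>x2. ee ((\<theta> * Bv b y) * x2))"
        unfolding \<phi>_def by (simp add: box_real)
      also have "\<dots> = ee ((\<theta> * Q1 a y) * x1) * complex_of_real (2 * sc (2*pi*(\<theta> * Bv b y)))"
        using ee_int[of "\<theta> * Bv b y"] by (simp add: integral_unique)
      finally show "integral (cbox (-1) 1) (\<lambda>x2. \<phi> x1 x2 y) = ee ((\<theta> * Q1 a y) * x1) * complex_of_real (2 * sc (2*pi*(\<theta> * Bv b y)))" .
    qed
    finally show "integral (cbox (-1, -One) (1, One)) (\<lambda>(x2,y). \<phi> x1 x2 y) = integral (cbox (-One) One) (\<lambda>y. ee ((\<theta> * Q1 a y) * x1) * complex_of_real (2 * sc (2*pi*(\<theta> * Bv b y))))" .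
  qed
  also have "\<dots> = integral (cbox (-One) One) (\<lambda>y. integral (cbox (-1) 1) (\<lambda>x1. ee ((\<theta> * Q1 a y) * x1) * complex_of_real (2 * sc (2*pi*(\<theta> * Bv b y)))))"
    by (rule integral_swap_continuous) (auto intro!: continuous_intros simp: case_prod_beta)
  also have "\<dots> = integral (cbox (-One) One) (\<lambda>y::real^4. complex_of_real (ker (Q1 a y) (Bv b y) \<theta>))"
  proof (rule integral_cong)
    fix y
    have "integral (cbox (-1) 1) (\<lambda>x1. ee ((\<theta> * Q1 a y) * x1) * complex_of_real (2 * sc (2*pi*(\<theta> * Bv b y))))
        = integral {-1..1} (\<lambda>x1. ee ((\<theta> * Q1 a y) * x1)) * complex_of_real (2 * sc (2*pi*(\<theta> * Bv b y)))"
      by (simp add: box_real)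
    also have "\<dots> = complex_of_real (ker (Q1 a y) (Bv b y) \<theta>)"
      using ee_int[of "\<theta> * Q1 a y"] by (simp add: integral_unique ker_def)
    finally show "integral (cbox (-1) 1) (\<lambda>x1. ee ((\<theta> * Q1 a y) * x1) * complex_of_real (2 * sc (2*pi*(\<theta> * Bv b y)))) = complex_of_real (ker (Q1 a y) (Bv b y) \<theta>)" .
  qed
  finally show ?thesis .
qed


definition cube :: "real \<Rightarrow> (real^4) set" where "cube r = cbox (- (r *\<^sub>R One)) (r *\<^sub>R One)"
definition obox :: "real \<Rightarrow> (real^4) set" where "obox r = box (- (r *\<^sub>R One)) (r *\<^sub>R One)"
definition shell :: "real \<Rightarrow> real \<Rightarrow> (real^4) set" where
  "shell p q = {y. p \<le> supnorm4 y \<and> supnorm4 y < q}"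

lemma One4_nth: "(One :: real^4) $ i = 1"
proof -
  have "(One :: real^4) $ i = (\<Sum>b\<in>(Basis::(real^4) set). b \<bullet> axis i 1)"
    by (simp add: cart_eq_inner_axis inner_sum_left)
  also have "\<dots> = (\<Sum>b\<in>(Basis::(real^4) set). if b = axis i 1 then 1 else 0)"
    by (rule sum.cong) (auto simp: inner_Basis)
  also have "\<dots> = 1" by simp
  finally show ?thesis .
qed

lemma One4_nth': "(\<Sum>x\<in>(Basis::(real^4) set). x $ i) = 1"
  using One4_nth[of i] by simp

lemma supnorm_ge: "\<bar>y $ i\<bar> \<le> supnorm4 y"
  unfolding supnorm4_def by (rule Max_ge) auto

lemma supnorm_nonneg: "0 \<le> supnorm4 y"
  using supnorm_ge[of y 1] by linarith

lemma supnorm_attained: "\<exists>i. supnorm4 y = \<bar>y $ i\<bar>"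
proof -
  have "supnorm4 y \<in> (\<lambda>i. \<bar>y $ i\<bar>) ` UNIV" unfolding supnorm4_def by (rule Max_in) auto
  then show ?thesis by auto
qed

lemma supnorm_le_iff: "supnorm4 y \<le> r \<longleftrightarrow> (\<forall>i. \<bar>y $ i\<bar> \<le> r)"
  unfolding supnorm4_def by (subst Max_le_iff) auto

lemma supnorm_less_iff: "supnorm4 y < r \<longleftrightarrow> (\<forall>i. \<bar>y $ i\<bar> < r)"
  unfolding supnorm4_def by (subst Max_less_iff) auto

lemma mem_cube: "y \<in> cube r \<longleftrightarrow> supnorm4 y \<le> r"
  unfolding cube_def supnorm_le_iff mem_box_cart by (auto simp: abs_le_iff One4_nth One4_nth') (metis minus_le_iff)+

lemma mem_obox: "y \<in> obox r \<longleftrightarrow> supnorm4 y < r"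
  unfolding obox_def supnorm_less_iff mem_box_cart by (auto simp: abs_less_iff One4_nth One4_nth') (metis minus_less_iff)+

lemma shell_eq: "shell p q = obox q - obox p"
  by (auto simp: shell_def mem_obox)

lemma supnorm_scale: "supnorm4 (c *\<^sub>R y) = \<bar>c\<bar> * supnorm4 y"
proof (rule antisym)
  show "supnorm4 (c *\<^sub>R y) \<le> \<bar>c\<bar> * supnorm4 y"
    unfolding supnorm_le_iff using supnorm_ge[of y]
    by (auto simp: abs_mult intro: mult_left_mono)
  obtain i where "supnorm4 y = \<bar>y $ i\<bar>" using supnorm_attained by blast
  then show "\<bar>c\<bar> * supnorm4 y \<le> supnorm4 (c *\<^sub>R y)"
    using supnorm_ge[of "c *\<^sub>R y" i] by (simp add: abs_mult)
qed

lemma supnorm_zero_iff: "supnorm4 y = 0 \<longleftrightarrow> y = 0"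
proof
  assume "supnorm4 y = 0"
  then have "\<forall>i. \<bar>y $ i\<bar> \<le> 0" using supnorm_le_iff[of y 0] by simp
  then show "y = 0" by (simp add: vec_eq_iff)
next
  assume "y = 0" then show "supnorm4 y = 0"
    using supnorm_le_iff[of y 0] supnorm_nonneg[of y] by simp
qed

lemma supnorm_alt: "supnorm4 y = max (max \<bar>y$1\<bar> \<bar>y$2\<bar>) (max \<bar>y$3\<bar> \<bar>y$4\<bar>)"
proof -
  have "(\<lambda>i. \<bar>y $ i\<bar>) ` UNIV = {\<bar>y$1\<bar>, \<bar>y$2\<bar>, \<bar>y$3\<bar>, \<bar>y$4\<bar>}"
    by (auto simp: UNIV_4)
  then show ?thesis unfolding supnorm4_def by (simp add: max.assoc)
qed

lemma cont_supnorm[continuous_intros]: "continuous_on S f \<Longrightarrow> continuous_on S (\<lambda>x. supnorm4 (f x))"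
  unfolding supnorm_alt by (intro continuous_intros)

lemma supnorm_One: "supnorm4 (One :: real^4) = 1"
  unfolding supnorm_alt by (simp add: One4_nth One4_nth')

lemma Q1_scale: "Q1 a (c *\<^sub>R y) = c^2 * Q1 a y"
  by (simp add: Q1_def sum_distrib_left power_mult_distrib mult_ac)
lemma Q2_scale: "Q2 b (c *\<^sub>R y) = c^2 * Q2 b y"
  by (simp add: Q2_def sum_distrib_left power_mult_distrib mult_ac)



lemma supnorm_0[simp]: "supnorm4 0 = 0" using supnorm_zero_iff by blast

locale setting =
  fixes a b :: "4 \<Rightarrow> int"
  assumes nr: "\<And>y. Q1 a y = 0 \<Longrightarrow> Q2 b y = 0 \<Longrightarrow> y = 0"
begin

definition Mf :: "real^4 \<Rightarrow> real" where "Mf y = max \<bar>Q1 a y\<bar> \<bar>Q2 b y\<bar>"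
definition gf :: "real^4 \<Rightarrow> real" where "gf y = 1 / Mf y"

lemma Mf_nonneg: "0 \<le> Mf y" by (simp add: Mf_def)
lemma Mf_scale: "Mf (c *\<^sub>R y) = c^2 * Mf y"
  by (simp add: Mf_def Q1_scale Q2_scale abs_mult max_mult_distrib_left)
lemma Mf_pos: "y \<noteq> 0 \<Longrightarrow> 0 < Mf y"
  using nr[of y] by (auto simp: Mf_def max_def)
lemma Mf_0: "Mf 0 = 0" by (simp add: Mf_def Q1_def Q2_def)
lemma Mf_cont[continuous_intros]: "continuous_on S f \<Longrightarrow> continuous_on S (\<lambda>x. Mf (f x))"
  unfolding Mf_def Q1_def Q2_def by (intro continuous_intros)
lemma Mf_eq: "Mf y = max \<bar>Q1 a y\<bar> \<bar>Bv b y\<bar>" by (simp add: Mf_def Q2_Bv)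

lemma m0_ex: "\<exists>m. 0 < m \<and> (\<forall>y. m * (supnorm4 y)^2 \<le> Mf y)"
proof -
  define Sp where "Sp = cube 1 - obox 1"
  have Sp: "y \<in> Sp \<longleftrightarrow> supnorm4 y = 1" for y unfolding Sp_def Diff_iff mem_cube mem_obox by linarith
  have cSp: "compact Sp" unfolding Sp_def cube_def obox_def Diff_eq
    by (intro compact_Int_closed compact_cbox closed_Compl open_box)
  have neSp: "Sp \<noteq> {}" using Sp[of One] supnorm_One by auto
  have coSp: "continuous_on Sp Mf" using Mf_cont[OF continuous_on_id, of Sp] by simp
  obtain u where u0: "u \<in> Sp" and u1: "\<forall>y\<in>Sp. Mf u \<le> Mf y"
    using continuous_attains_inf[OF cSp neSp coSp] by blast
  have u: "u \<in> Sp" "\<And>y. y \<in> Sp \<Longrightarrow> Mf u \<le> Mf y" using u0 u1 by auto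
  have "u \<noteq> 0" using u Sp[of u] supnorm_zero_iff[of u] by auto
  then have m: "0 < Mf u" by (rule Mf_pos)
  have "Mf u * (supnorm4 y)^2 \<le> Mf y" for y
  proof (cases "y = 0")
    case True then show ?thesis by (simp add: Mf_0 supnorm_zero_iff)
  next
    case False
    define s where "s = supnorm4 y"
    have s: "0 < s" using False supnorm_zero_iff[of y] supnorm_nonneg[of y] by (auto simp: s_def)
    have "(1/s) *\<^sub>R y \<in> Sp" using s by (simp add: Sp supnorm_scale s_def)
    then have "Mf u \<le> Mf ((1/s) *\<^sub>R y)" by (rule u)
    also have "\<dots> = Mf y / s^2" by (simp add: Mf_scale power_divide)
    finally have "Mf u \<le> Mf y / s^2" .
    then show ?thesis using s by (simp add: s_def[symmetric] pos_le_divide_eq)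
  qed
  then show ?thesis using m by blast
qed

definition m0 :: real where "m0 = (SOME m. 0 < m \<and> (\<forall>y. m * (supnorm4 y)^2 \<le> Mf y))"
lemma m0_both: "0 < m0 \<and> (\<forall>y. m0 * (supnorm4 y)^2 \<le> Mf y)"
  unfolding m0_def by (rule someI_ex[OF m0_ex])
lemma m0: "0 < m0" "m0 * (supnorm4 y)^2 \<le> Mf y"
  using m0_both by auto

lemma gf_nonneg: "0 \<le> gf y" by (simp add: gf_def Mf_nonneg)
lemma gf_scale: "gf (c *\<^sub>R y) = gf y / c^2" by (simp add: gf_def Mf_scale)
lemma gf_bound: "y \<noteq> 0 \<Longrightarrow> gf y \<le> 1 / (m0 * (supnorm4 y)^2)"
proof -
  assume y: "y \<noteq> 0"
  have "0 < m0 * (supnorm4 y)^2" using m0(1) y supnorm_zero_iff[of y] supnorm_nonneg[of y] by auto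
  then show ?thesis unfolding gf_def using m0(2)[of y] by (intro divide_left_mono) auto
qed

definition gt :: "real \<Rightarrow> real^4 \<Rightarrow> real" where "gt c y = 1 / max (Mf y) (1/c)"

lemma gt_cont: "0 < c \<Longrightarrow> continuous_on S (gt c)"
  unfolding gt_def[abs_def]
  by (intro continuous_intros continuous_on_id) (auto simp: max_def)
lemma gt_nonneg: "0 \<le> gt c y"
proof -
  have "0 \<le> max (Mf y) (1/c)" using Mf_nonneg[of y] by (simp add: le_max_iff_disj)
  then show ?thesis by (simp add: gt_def)
qed
lemma gt_le_gf: "y \<noteq> 0 \<Longrightarrow> 0 < c \<Longrightarrow> gt c y \<le> gf y"
  using Mf_pos[of y] by (auto simp: gt_def gf_def intro!: divide_left_mono)
lemma gt_le_c: "0 < c \<Longrightarrow> gt c y \<le> c"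
proof -
  assume c: "0 < c"
  have m: "1/c \<le> max (Mf y) (1/c)" by simp
  have p: "0 < max (Mf y) (1/c) * (1/c)" using c by (intro mult_pos_pos) (simp_all add: less_max_iff_disj)
  have "1 / max (Mf y) (1/c) \<le> 1 / (1/c)" by (rule divide_left_mono[OF m _ p]) simp
  then show ?thesis using c by (simp add: gt_def)
qed
lemma gt_mono: "0 < c \<Longrightarrow> c \<le> d \<Longrightarrow> gt c y \<le> gt d y"
proof -
  assume c: "0 < c" "c \<le> d"
  have "1/d \<le> 1/c" using c by (intro divide_left_mono) auto
  then have "max (Mf y) (1/d) \<le> max (Mf y) (1/c)" by auto
  moreover have "0 < max (Mf y) (1/d)" using c by (simp add: less_max_iff_disj)
  ultimately show ?thesis unfolding gt_def by (intro divide_left_mono) auto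
qed
lemma gt_scale: "0 < r \<Longrightarrow> gt c (r *\<^sub>R y) = gt (c * r^2) y / r^2"
proof -
  assume r: "0 < r"
  have "max (r^2 * Mf y) (1/c) = r^2 * max (Mf y) (1/(c*r^2))"
    using r by (simp add: max_mult_distrib_left field_simps)
  then show ?thesis using r by (simp add: gt_def Mf_scale)
qed
lemma gt_lim: "y \<noteq> 0 \<Longrightarrow> (\<lambda>n. gt (real n + 1) y) \<longlonglongrightarrow> gf y"
proof -
  assume y: "y \<noteq> 0"
  have "eventually (\<lambda>n. gt (real n + 1) y = gf y) sequentially"
  proof -
    obtain N :: nat where N: "1 / Mf y < real N" using reals_Archimedean2 by blast
    have "gt (real n + 1) y = gf y" if "n \<ge> N" for n
    proof -
      have "1 / Mf y < real n + 1" using N that by linarith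
      then have "1 / (real n + 1) \<le> Mf y" using Mf_pos[OF y]
        by (simp add: divide_less_eq field_simps)
      then show ?thesis by (simp add: gt_def gf_def max_def)
    qed
    then show ?thesis by (auto simp: eventually_sequentially)
  qed
  then show ?thesis by (rule tendsto_eventually)
qed

end


lemma scale_cube:
  fixes f :: "real^4 \<Rightarrow> real"
  assumes "(f has_integral i) (cube r)" "0 < m"
  shows "((\<lambda>x. f (m *\<^sub>R x)) has_integral i / m^4) (cube (r/m))"
proof -
  have "((\<lambda>x. f (m *\<^sub>R x + 0)) has_integral i /\<^sub>R m ^ DIM(real^4))
          (cbox ((- (r *\<^sub>R One) - 0) /\<^sub>R m) ((r *\<^sub>R One - 0) /\<^sub>R m))"
    using assms unfolding cube_def by (intro has_integral_affinity') auto
  moreover have "(- (r *\<^sub>R One) - 0) /\<^sub>R m = - ((r/m) *\<^sub>R (One::real^4))"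
                "(r *\<^sub>R One - 0) /\<^sub>R m = (r/m) *\<^sub>R (One::real^4)"
    by (simp_all add: divide_inverse_commute)
  ultimately show ?thesis by (simp add: cube_def divide_inverse_commute)
qed

lemma content_cube1: "Henstock_Kurzweil_Integration.content (cube 1) = 16"
proof -
  have ne: "cube 1 \<noteq> {}" using mem_cube[of 0 1] by auto
  have "Henstock_Kurzweil_Integration.content (cube 1) = (\<Prod>i\<in>UNIV. ((1::real) *\<^sub>R (One::real^4)) $ i - (- ((1::real) *\<^sub>R (One::real^4))) $ i)"
    using ne unfolding cube_def by (rule content_cbox_cart)
  also have "\<dots> = (\<Prod>i\<in>(UNIV::4 set). 2)" by (simp add: One4_nth')
  also have "\<dots> = 16" by simp
  finally show ?thesis .
qed

lemma cont_integrable_obox: "continuous_on UNIV F \<Longrightarrow> (F::real^4\<Rightarrow>real) integrable_on obox r"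
  unfolding obox_def integrable_on_open_interval
  by (rule integrable_continuous) (auto intro: continuous_on_subset)

lemma has_integral_shell:
  fixes F :: "real^4 \<Rightarrow> real"
  assumes "(F has_integral I) (obox q)" "(F has_integral J) (obox p)" "p \<le> q"
  shows "(F has_integral I - J) (shell p q)"
proof -
  have "((\<lambda>x. if x \<in> obox q then F x else 0) has_integral I) UNIV"
       "((\<lambda>x. if x \<in> obox p then F x else 0) has_integral J) UNIV"
    using assms by (simp_all add: has_integral_restrict_UNIV)
  then have "((\<lambda>x. (if x \<in> obox q then F x else 0) - (if x \<in> obox p then F x else 0)) has_integral I - J) UNIV"
    by (rule has_integral_diff)
  moreover have "(\<lambda>x. (if x \<in> obox q then F x else 0) - (if x \<in> obox p then F x else 0))
      = (\<lambda>x. if x \<in> shell p q then F x else 0)"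
    using assms(3) by (auto simp: fun_eq_iff shell_def mem_obox)
  ultimately show ?thesis by (simp add: has_integral_restrict_UNIV)
qed

lemma cont_integrable_shell:
  "continuous_on UNIV F \<Longrightarrow> p \<le> q \<Longrightarrow> (F::real^4\<Rightarrow>real) integrable_on shell p q"
  using has_integral_shell[of F _ q _ p] cont_integrable_obox[of F]
  by (meson integrable_integral integrable_on_def)

context setting begin

definition J :: "real \<Rightarrow> real" where "J c = integral (cube 1) (gt c)"

lemma gt_int_cube: "0 < c \<Longrightarrow> gt c integrable_on cube r"
  unfolding cube_def by (rule integrable_continuous) (rule gt_cont)

lemma J_int: "0 < c \<Longrightarrow> (gt c has_integral J c) (cube 1)"
  using gt_int_cube[of c 1] by (simp add: J_def has_integral_integral)

lemma J_nonneg: "0 < c \<Longrightarrow> 0 \<le> J c"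
  using J_int has_integral_nonneg gt_nonneg by blast

lemma J_mono:
  assumes "0 < c" "c \<le> d" shows "J c \<le> J d"
proof -
  have d: "0 < d" using assms by linarith
  show ?thesis
    by (rule has_integral_le[OF J_int[OF assms(1)] J_int[OF d]]) (rule gt_mono[OF assms])
qed

lemma gt_half: "0 < c \<Longrightarrow> (gt c has_integral J (c/4) / 4) (cube (1/2))"
proof -
  assume c: "0 < c"
  have "((\<lambda>x. gt (c/4) (2 *\<^sub>R x)) has_integral J (c/4) / 2^4) (cube (1/2))"
    using scale_cube[OF J_int[of "c/4"], of 2] c by simp
  moreover have "gt (c/4) (2 *\<^sub>R x) = gt c x / 4" for x by (simp add: gt_scale)
  ultimately have "((\<lambda>x. gt c x / 4) has_integral J (c/4) / 16) (cube (1/2))" by simp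
  then have "((\<lambda>x. 4 * (gt c x / 4)) has_integral 4 * (J (c/4) / 16)) (cube (1/2))"
    by (rule has_integral_mult_right)
  then show ?thesis by simp
qed

lemma J_bound: "0 < c \<Longrightarrow> J c \<le> 256 / (3 * m0)"
proof -
  assume c: "0 < c"
  have r1: "((\<lambda>y. if y \<in> cube (1/2) then gt c y else 0) has_integral J (c/4) / 4) (cube 1)"
    using gt_half[OF c] by (subst has_integral_restrict) (auto simp: mem_cube)
  have r2: "((\<lambda>y. 4 / m0) has_integral 16 * (4/m0)) (cube 1)"
    using has_integral_const[of "4/m0" "- (1 *\<^sub>R One)" "1 *\<^sub>R (One::real^4)"] content_cube1
    by (simp add: cube_def)
  have le: "gt c y \<le> (if y \<in> cube (1/2) then gt c y else 0) + 4 / m0" if "y \<in> cube 1" for y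
  proof (cases "y \<in> cube (1/2)")
    case True then show ?thesis using m0(1) by simp
  next
    case False
    then have s: "1/2 < supnorm4 y" by (simp add: mem_cube)
    then have y: "y \<noteq> 0" by auto
    have "gt c y \<le> gf y" by (rule gt_le_gf[OF y c])
    also have "\<dots> \<le> 1 / (m0 * (supnorm4 y)^2)" by (rule gf_bound[OF y])
    also have "\<dots> \<le> 1 / (m0 * (1/2)^2)"
      using s m0(1) by (intro divide_left_mono mult_left_mono power_mono) auto
    finally show ?thesis using False m0(1) by (simp add: field_simps power2_eq_square)
  qed
  have "J c \<le> J (c/4) / 4 + 16 * (4/m0)"
    using has_integral_le[OF J_int[OF c] has_integral_add[OF r1 r2]] le by blast
  moreover have "J (c/4) \<le> J c" using c by (intro J_mono) auto
  moreover have "\<And>u v X::real. u \<le> v/4 + X \<Longrightarrow> v \<le> u \<Longrightarrow> u \<le> X * (4/3)" by linarith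
  ultimately have "J c \<le> (16 * (4/m0)) * (4/3)" by blast
  moreover have "(16 * (4/m0)) * (4/3) = 256 / (3 * m0)" by simp
  ultimately show ?thesis by simp
qed

definition C0 :: real where "C0 = integral (cube 1) gf"

lemma negl0: "negligible {x \<in> S. x = (0::real^4)}"
  by (rule negligible_subset[of "{0}"]) auto

lemma gf_int_cube1: "(gf has_integral C0) (cube 1)" and gf_int_S0: "(gf has_integral C0) (cube 1 - {0})"
proof -
  define S0 where "S0 = cube 1 - {0}"
  have spike: "integral S0 f = integral (cube 1) f" for f :: "real^4 \<Rightarrow> real"
    unfolding S0_def by (rule integral_spike_set) (auto intro: negligible_subset[of "{0}"])
  have int: "gt (real k + 1) integrable_on S0" for k
    unfolding S0_def by (rule integrable_spike_set[OF gt_int_cube[of "real k + 1" 1]]) (auto intro: negligible_subset[of "{0}"])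
  have mct: "gf integrable_on S0 \<and> ((\<lambda>k. integral S0 (gt (real k + 1))) \<longlongrightarrow> integral S0 gf) sequentially"
  proof (rule monotone_convergence_increasing[OF int])
    show "gt (real k + 1) x \<le> gt (real (Suc k) + 1) x" for k x by (intro gt_mono) auto
    show "(\<lambda>k. gt (real k + 1) x) \<longlonglongrightarrow> gf x" if "x \<in> S0" for x
      using that by (intro gt_lim) (auto simp: S0_def)
    have "integral S0 (gt (real k + 1)) \<in> {0 .. 256 / (3 * m0)}" for k
      using J_nonneg[of "real k + 1"] J_bound[of "real k + 1"] by (simp add: spike J_def)
    then have sub: "range (\<lambda>k. integral S0 (gt (real k + 1))) \<subseteq> {0 .. 256 / (3 * m0)}" by auto
    show "bounded (range (\<lambda>k. integral S0 (gt (real k + 1))))"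
      by (rule bounded_subset[OF compact_imp_bounded[OF compact_Icc] sub])
  qed
  have gS0: "gf integrable_on S0" using mct by blast
  have gc: "gf integrable_on cube 1"
    using gS0 unfolding S0_def by (rule integrable_spike_set) (auto intro: negligible_subset[of "{0}"])
  show "(gf has_integral C0) (cube 1)" using gc by (simp add: C0_def has_integral_integral)
  show "(gf has_integral C0) (cube 1 - {0})" using gS0 spike[of gf] by (simp add: S0_def C0_def has_integral_integral)
qed

lemma gf_cube: "0 < s \<Longrightarrow> (gf has_integral s^2 * C0) (cube s)"
proof -
  assume s: "0 < s"
  have "((\<lambda>x. gf ((1/s) *\<^sub>R x)) has_integral C0 / (1/s)^4) (cube (1/(1/s)))"
    using s by (intro scale_cube gf_int_cube1) auto
  moreover have "gf ((1/s) *\<^sub>R x) = s^2 * gf x" for x using s by (simp add: gf_scale power_divide)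
  ultimately have "((\<lambda>x. s^2 * gf x) has_integral s^2 * (s^2 * C0)) (cube s)"
    using s by (simp add: power_divide field_simps power4_eq_xxxx power2_eq_square)
  then have "((\<lambda>x. (1/s^2) * (s^2 * gf x)) has_integral (1/s^2) * (s^2 * (s^2 * C0))) (cube s)"
    by (rule has_integral_mult_right)
  moreover have "(\<lambda>x. (1/s^2) * (s^2 * gf x)) = gf" using s by (simp add: fun_eq_iff)
  moreover have "(1/s^2) * (s^2 * (s^2 * C0)) = s^2 * C0" using s by (simp add: power2_eq_square)
  ultimately show ?thesis by simp
qed

lemma gf_obox: "0 < s \<Longrightarrow> (gf has_integral s^2 * C0) (obox s)"
  using gf_cube unfolding cube_def obox_def by (simp add: has_integral_open_interval)

lemma gf_shell: "0 < p \<Longrightarrow> p \<le> q \<Longrightarrow> (gf has_integral (q^2 - p^2) * C0) (shell p q)"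
  using has_integral_shell[OF gf_obox[of q] gf_obox[of p]] by (simp add: left_diff_distrib)

end


context setting begin

definition hh :: "real^4 \<Rightarrow> real" where "hh y = 1 / ((supnorm4 y)^2 * Mf y)"

lemma C0_nonneg: "0 \<le> C0"
  using gf_int_cube1 gf_nonneg by (metis has_integral_nonneg)

lemma hh_eq: "y \<noteq> 0 \<Longrightarrow> hh y = gf y / (supnorm4 y)^2"
  by (simp add: hh_def gf_def)

lemma hh_int: "0 < p \<Longrightarrow> p \<le> q \<Longrightarrow> hh integrable_on shell p q"
proof -
  assume p: "0 < p" and pq: "p \<le> q"
  define ht where "ht y = 1 / ((max (supnorm4 y) p)^2 * max (Mf y) (m0 * p^2))" for y
  have pos1: "0 < max (supnorm4 y) p" for y using p by (simp add: less_max_iff_disj)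
  have pos2: "0 < max (Mf y) (m0 * p^2)" for y using p m0(1) by (simp add: less_max_iff_disj)
  have pos3: "(max (supnorm4 y) p)^2 * max (Mf y) (m0 * p^2) \<noteq> 0" for y
    using pos1[of y] pos2[of y] by simp
  have "continuous_on UNIV ht"
    unfolding ht_def
    by (intro continuous_intros continuous_on_id) (use pos3 in auto)
  then have "ht integrable_on shell p q" using pq by (rule cont_integrable_shell)
  moreover have "ht y = hh y" if "y \<in> shell p q" for y
  proof -
    have s: "p \<le> supnorm4 y" using that by (simp add: shell_def)
    have "m0 * p^2 \<le> m0 * (supnorm4 y)^2" using s p m0(1) by (intro mult_left_mono power_mono) auto
    also have "\<dots> \<le> Mf y" by (rule m0(2))
    finally show ?thesis using s by (simp add: ht_def hh_def max_def)
  qed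
  ultimately show ?thesis by (rule integrable_eq)
qed

lemma piece:
  assumes r: "0 < r" and q: "1 < q"
  shows "C0 * (1 - 1/q^2) \<le> integral (shell r (r*q)) hh \<and> integral (shell r (r*q)) hh \<le> C0 * (q^2 - 1)"
proof -
  have rq: "r \<le> r*q" using r q by simp
  have hi: "hh integrable_on shell r (r*q)" using hh_int[OF r rq] .
  have g: "(gf has_integral ((r*q)^2 - r^2) * C0) (shell r (r*q))" using gf_shell[OF r rq] .
  have g1: "((\<lambda>y. gf y / r^2) has_integral ((r*q)^2 - r^2) * C0 / r^2) (shell r (r*q))"
    using has_integral_divide[OF g] by simp
  have g2: "((\<lambda>y. gf y / (r*q)^2) has_integral ((r*q)^2 - r^2) * C0 / (r*q)^2) (shell r (r*q))"
    using has_integral_divide[OF g] by simp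
  have up: "hh y \<le> gf y / r^2" and lo: "gf y / (r*q)^2 \<le> hh y" if "y \<in> shell r (r*q)" for y
  proof -
    have s: "r \<le> supnorm4 y" "supnorm4 y < r*q" using that by (auto simp: shell_def)
    then have y: "y \<noteq> 0" using r by auto
    have sp: "0 < supnorm4 y" using s r by linarith
    show "hh y \<le> gf y / r^2" unfolding hh_eq[OF y]
      using s r gf_nonneg[of y] by (intro divide_left_mono power_mono mult_pos_pos) auto
    show "gf y / (r*q)^2 \<le> hh y" unfolding hh_eq[OF y]
      using s sp gf_nonneg[of y] by (intro divide_left_mono power_mono mult_pos_pos) auto
  qed
  have "integral (shell r (r*q)) hh \<le> ((r*q)^2 - r^2) * C0 / r^2"
    using has_integral_le[OF integrable_integral[OF hi] g1] up by blast
  also have "\<dots> = C0 * (q^2 - 1)" using r by (simp add: field_simps power_mult_distrib)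
  finally have 1: "integral (shell r (r*q)) hh \<le> C0 * (q^2 - 1)" .
  have "((r*q)^2 - r^2) * C0 / (r*q)^2 \<le> integral (shell r (r*q)) hh"
    using has_integral_le[OF g2 integrable_integral[OF hi]] lo by blast
  moreover have "((r*q)^2 - r^2) * C0 / (r*q)^2 = C0 * (1 - 1/q^2)"
    using r q by (simp add: field_simps power_mult_distrib)
  ultimately show ?thesis using 1 by simp
qed

lemma shell_add:
  assumes "0 < p" "p \<le> q" "q \<le> s"
  shows "integral (shell p s) hh = integral (shell p q) hh + integral (shell q s) hh"
proof -
  have e: "shell p q \<inter> shell q s = {}" by (auto simp: shell_def)
  have "(hh has_integral integral (shell p q) hh + integral (shell q s) hh) (shell p q \<union> shell q s)"
    using assms
    by (intro has_integral_Un integrable_integral hh_int) (auto simp: e)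
  moreover have "shell p q \<union> shell q s = shell p s" using assms by (auto simp: shell_def)
  ultimately show ?thesis by (simp add: integral_unique)
qed

lemma shells_n:
  assumes p: "0 < p" and q: "1 < q"
  shows "real n * (C0 * (1 - 1/q^2)) \<le> integral (shell p (p*q^n)) hh \<and> integral (shell p (p*q^n)) hh \<le> real n * (C0 * (q^2 - 1))"
proof (induction n)
  case 0
  have "shell p p = {}" by (auto simp: shell_def)
  then show ?case by simp
next
  case (Suc n)
  have qn: "1 \<le> q^n" using q by simp
  have r: "0 < p*q^n" using p q by simp
  have "integral (shell p (p*q^Suc n)) hh = integral (shell p (p*q^n)) hh + integral (shell (p*q^n) (p*q^n*q)) hh"
    using p q qn by (subst shell_add[of p "p*q^n"]) (auto simp: mult_ac)
  then show ?case using Suc piece[OF r q] by (simp add: distrib_right)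
qed

lemma exp_bounds:
  fixes x :: real
  assumes "0 \<le> x"
  shows "exp x - 1 \<le> x * exp x" "x * exp (-x) \<le> 1 - exp (-x)"
proof -
  have "1 - x \<le> exp (-x)" using exp_ge_add_one_self[of "-x"] by simp
  then have "(1 - x) * exp x \<le> exp (-x) * exp x" by (intro mult_right_mono) auto
  then show "exp x - 1 \<le> x * exp x" by (simp add: algebra_simps exp_minus_inverse)
  have "1 + x \<le> exp x" by (rule exp_ge_add_one_self)
  then have "(1 + x) * exp (-x) \<le> exp x * exp (-x)" by (intro mult_right_mono) auto
  then show "x * exp (-x) \<le> 1 - exp (-x)" by (simp add: algebra_simps exp_minus_inverse)
qed

lemma shell_value:
  assumes Y: "0 < Y1" "Y1 < Y2"
  shows "(hh has_integral 2 * C0 * ln (Y2/Y1)) (shell Y1 Y2)"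
proof -
  define L where "L = ln (Y2/Y1)"
  have L: "0 < L" using Y by (simp add: L_def)
  define X where "X = integral (shell Y1 Y2) hh"
  have bnd: "2*L*C0 * exp (-(2*L/real N)) \<le> X \<and> X \<le> 2*L*C0 * exp (2*L/real N)" if N: "0 < N" for N :: nat
  proof -
    define q where "q = exp (L / real N)"
    have q: "1 < q" using L N by (simp add: q_def)
    have qN: "Y1 * q^N = Y2"
      using N Y by (simp add: q_def L_def exp_of_nat_mult[symmetric])
    have q2: "q^2 = exp (2*L/real N)" "1/q^2 = exp (-(2*L/real N))"
      by (simp_all add: q_def exp_of_nat_mult[symmetric] exp_minus_inverse field_simps power_inverse)
    have sn: "real N * (C0 * (1 - 1/q^2)) \<le> X \<and> X \<le> real N * (C0 * (q^2 - 1))"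
      using shells_n[OF Y(1) q, of N] qN by (simp add: X_def)
    have x0: "0 \<le> 2*L/real N" using L by simp
    have "real N * (C0 * (q^2 - 1)) \<le> real N * (C0 * (2*L/real N * exp (2*L/real N)))"
      using exp_bounds(1)[OF x0] C0_nonneg unfolding q2 by (intro mult_left_mono) auto
    also have "\<dots> = 2*L*C0 * exp (2*L/real N)" using N by simp
    finally have up: "X \<le> 2*L*C0 * exp (2*L/real N)" using sn by linarith
    have "real N * (C0 * (2*L/real N * exp (-(2*L/real N)))) \<le> real N * (C0 * (1 - 1/q^2))"
      using exp_bounds(2)[OF x0] C0_nonneg unfolding q2 by (intro mult_left_mono) (auto simp: exp_minus inverse_eq_divide)
    moreover have "real N * (C0 * (2*L/real N * exp (-(2*L/real N)))) = 2*L*C0 * exp (-(2*L/real N))" using N by simp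
    ultimately have lo: "2*L*C0 * exp (-(2*L/real N)) \<le> X" using sn by linarith
    show ?thesis using up lo by blast
  qed
  have lim0: "(\<lambda>N. 2*L/real N) \<longlonglongrightarrow> 0"
    using tendsto_mult[OF tendsto_const[of "2*L"] lim_inverse_n] by (simp add: divide_inverse)
  have l1: "(\<lambda>N. 2*L*C0 * exp (2*L/real N)) \<longlonglongrightarrow> 2*L*C0"
    using tendsto_mult[OF tendsto_const[of "2*L*C0"] tendsto_exp[OF lim0]] by simp
  have l2: "(\<lambda>N. 2*L*C0 * exp (-(2*L/real N))) \<longlonglongrightarrow> 2*L*C0"
    using tendsto_mult[OF tendsto_const[of "2*L*C0"] tendsto_exp[OF tendsto_minus[OF lim0]]] by simp
  have "X \<le> 2*L*C0"
    by (rule LIMSEQ_le_const[OF l1]) (use bnd in \<open>auto intro!: exI[of _ 1]\<close>)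
  moreover have "2*L*C0 \<le> X"
    by (rule LIMSEQ_le_const2[OF l2]) (use bnd in \<open>auto intro!: exI[of _ 1]\<close>)
  ultimately have "X = 2 * C0 * L" by simp
  moreover have "hh integrable_on shell Y1 Y2" using Y by (intro hh_int) auto
  ultimately show ?thesis by (simp add: X_def L_def has_integral_integral)
qed

end


lemma cube1_eq: "cube 1 = cbox (-One) (One::real^4)" by (simp add: cube_def)

lemma ball_sub_real:
  fixes a' b' B :: real
  assumes "ball 0 B \<subseteq> cbox a' b'" "0 < B"
  shows "a' \<le> -B \<and> B \<le> b'"
proof (rule ccontr)
  assume "\<not> (a' \<le> -B \<and> B \<le> b')"
  then consider "-B < a'" | "b' < B" by linarith
  then show False
  proof cases
    case 1
    define x where "x = (-B + min a' 0)/2"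
    have "x \<in> ball 0 B" using 1 assms(2) by (auto simp: x_def dist_real_def min_def)
    moreover have "x < a'" using 1 assms(2) by (auto simp: x_def min_def)
    ultimately show False using assms(1) by (auto simp: subset_iff)
  next
    case 2
    define x where "x = (B + max b' 0)/2"
    have "x \<in> ball 0 B" using 2 assms(2) by (auto simp: x_def dist_real_def max_def)
    moreover have "b' < x" using 2 assms(2) by (auto simp: x_def max_def)
    ultimately show False using assms(1) by (auto simp: subset_iff)
  qed
qed

context setting begin

definition kk :: "real \<Rightarrow> real^4 \<Rightarrow> complex" where
  "kk \<theta> y = complex_of_real (ker (Q1 a y) (Bv b y) \<theta>)"

lemma kk_cont: "continuous_on S (\<lambda>(\<theta>,y). kk \<theta> y)"
  unfolding kk_def ker_def by (auto simp: case_prod_beta intro!: continuous_intros)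

lemma tau_eq: "tau_inner a b \<theta> = integral (cbox (-One) One) (kk \<theta>)"
  by (simp add: tau_inner_eq kk_def[abs_def])

lemma tau_cont: "continuous_on UNIV (tau_inner a b)"
proof -
  have "continuous_on UNIV (\<lambda>\<theta>. integral (cbox (-One) One) (kk \<theta>))"
    by (rule integral_continuous_on_param) (rule kk_cont)
  then show ?thesis by (simp add: tau_eq[abs_def])
qed

lemma tau_even: "tau_inner a b (-\<theta>) = tau_inner a b \<theta>"
  unfolding tau_eq kk_def by (simp add: ker_even)

definition Fc :: "real \<Rightarrow> complex" where "Fc t = integral {0..t} (tau_inner a b)"

definition K1 :: real where "K1 = (12 + 12 * SiB) / (2*pi)"

lemma inner_eq:
  assumes "0 \<le> t" "y \<noteq> 0"
  shows "integral {0..t} (\<lambda>\<theta>. kk \<theta> y) = complex_of_real (Kf (Q1 a y) (Bv b y) t)"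
proof -
  have m: "max \<bar>Q1 a y\<bar> \<bar>Bv b y\<bar> > 0" using Mf_pos[OF assms(2)] by (simp add: Mf_eq)
  show ?thesis unfolding kk_def
    by (rule integral_unique[OF has_integral_of_real[OF Kf_int[OF m assms(1)]]])
qed

lemma inner_cont: "continuous_on UNIV (\<lambda>y. integral {0..t} (\<lambda>\<theta>. kk \<theta> y))"
proof -
  have "continuous_on (UNIV \<times> cbox 0 t) (\<lambda>(y, \<theta>). kk \<theta> y)"
    unfolding kk_def ker_def by (auto simp: case_prod_beta intro!: continuous_intros)
  then have "continuous_on UNIV (\<lambda>y. integral (cbox 0 t) (\<lambda>\<theta>. kk \<theta> y))"
    by (rule integral_continuous_on_param)
  then show ?thesis by (simp add: box_real)
qed

lemma Fc_eq:
  assumes t: "0 \<le> t"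
  shows "Fc t = integral (cube 1 - {0}) (\<lambda>y. complex_of_real (Kf (Q1 a y) (Bv b y) t))"
    and "(\<lambda>y. complex_of_real (Kf (Q1 a y) (Bv b y) t)) integrable_on (cube 1 - {0})"
proof -
  have "Fc t = integral (cbox 0 t) (\<lambda>\<theta>. integral (cbox (-One) One) (kk \<theta>))"
    by (simp add: Fc_def tau_eq[abs_def] box_real)
  also have "\<dots> = integral (cbox (-One) One) (\<lambda>y. integral (cbox 0 t) (\<lambda>\<theta>. kk \<theta> y))"
    by (rule integral_swap_continuous) (rule kk_cont)
  also have "\<dots> = integral (cube 1 - {0}) (\<lambda>y. integral {0..t} (\<lambda>\<theta>. kk \<theta> y))"
    by (simp add: box_real cube1_eq[symmetric]) (rule integral_spike_set; auto intro: negligible_subset[of "{0}"])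
  also have "\<dots> = integral (cube 1 - {0}) (\<lambda>y. complex_of_real (Kf (Q1 a y) (Bv b y) t))"
    by (rule integral_cong) (use inner_eq t in auto)
  finally show "Fc t = integral (cube 1 - {0}) (\<lambda>y. complex_of_real (Kf (Q1 a y) (Bv b y) t))" .
  have "(\<lambda>y. integral {0..t} (\<lambda>\<theta>. kk \<theta> y)) integrable_on cube 1"
    unfolding cube_def by (rule integrable_continuous) (rule continuous_on_subset[OF inner_cont], simp)
  then have "(\<lambda>y. integral {0..t} (\<lambda>\<theta>. kk \<theta> y)) integrable_on (cube 1 - {0})"
    by (rule integrable_spike_set) (auto intro: negligible_subset[of "{0}"])
  then show "(\<lambda>y. complex_of_real (Kf (Q1 a y) (Bv b y) t)) integrable_on (cube 1 - {0})"
    by (rule integrable_eq) (use inner_eq t in auto)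
qed

lemma Fc_lim: "(Fc \<longlongrightarrow> complex_of_real C0) at_top"
proof (rule tendsto_at_topI_sequentially)
  fix X :: "nat \<Rightarrow> real"
  assume X: "filterlim X at_top sequentially"
  define Z where "Z n = max (X n) 0" for n
  have Z: "filterlim Z at_top sequentially"
    by (rule filterlim_at_top_mono[OF X]) (simp add: Z_def)
  define S where "S = cube 1 - {0::real^4}"
  have dct: "(\<lambda>k. integral S (\<lambda>y. complex_of_real (Kf (Q1 a y) (Bv b y) (Z k))))
        \<longlonglongrightarrow> integral S (\<lambda>y. complex_of_real (gf y))"
  proof (rule dominated_convergence(2))
    show "(\<lambda>y. complex_of_real (Kf (Q1 a y) (Bv b y) (Z k))) integrable_on S" for k
      unfolding S_def by (rule Fc_eq(2)) (simp add: Z_def)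
    show "(\<lambda>y. K1 * gf y) integrable_on S"
      unfolding S_def by (rule has_integral_integrable[OF has_integral_mult_right[OF gf_int_S0]])
    show "norm (complex_of_real (Kf (Q1 a y) (Bv b y) (Z k))) \<le> K1 * gf y" if "y \<in> S" for k y
    proof -
      have y: "y \<noteq> 0" using that by (simp add: S_def)
      have m: "max \<bar>Q1 a y\<bar> \<bar>Bv b y\<bar> > 0" using Mf_pos[OF y] by (simp add: Mf_eq)
      have "\<bar>Kf (Q1 a y) (Bv b y) (Z k)\<bar> \<le> K1 * (1 / max \<bar>Q1 a y\<bar> \<bar>Bv b y\<bar>)"
        unfolding K1_def by (rule Kf_bound[OF m]) (simp add: Z_def)
      then show ?thesis by (simp add: gf_def Mf_eq)
    qed
    show "(\<lambda>k. complex_of_real (Kf (Q1 a y) (Bv b y) (Z k))) \<longlonglongrightarrow> complex_of_real (gf y)" if "y \<in> S" for y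
    proof -
      have y: "y \<noteq> 0" using that by (simp add: S_def)
      have m: "max \<bar>Q1 a y\<bar> \<bar>Bv b y\<bar> > 0" using Mf_pos[OF y] by (simp add: Mf_eq)
      have "(\<lambda>k. Kf (Q1 a y) (Bv b y) (Z k)) \<longlonglongrightarrow> 1 / max \<bar>Q1 a y\<bar> \<bar>Bv b y\<bar>"
        by (rule filterlim_compose[OF Kf_lim[OF m] Z])
      then have "(\<lambda>k. complex_of_real (Kf (Q1 a y) (Bv b y) (Z k))) \<longlonglongrightarrow> complex_of_real (1 / max \<bar>Q1 a y\<bar> \<bar>Bv b y\<bar>)"
        by (rule tendsto_of_real)
      then show ?thesis by (simp add: gf_def Mf_eq)
    qed
  qed
  have "integral S (\<lambda>y. complex_of_real (gf y)) = complex_of_real C0"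
    unfolding S_def by (rule integral_unique[OF has_integral_of_real[OF gf_int_S0]])
  then have l: "(\<lambda>k. integral S (\<lambda>y. complex_of_real (Kf (Q1 a y) (Bv b y) (Z k)))) \<longlonglongrightarrow> complex_of_real C0"
    using dct by simp
  have "eventually (\<lambda>n. 0 \<le> X n) sequentially"
    using X by (simp add: filterlim_at_top)
  then have "eventually (\<lambda>n. integral S (\<lambda>y. complex_of_real (Kf (Q1 a y) (Bv b y) (Z n))) = Fc (X n)) sequentially"
    by eventually_elim (simp add: Z_def S_def Fc_eq(1))
  then show "(\<lambda>n. Fc (X n)) \<longlonglongrightarrow> complex_of_real C0"
    by (rule Lim_transform_eventually[OF l])
qed

lemma tau_has_integral: "(tau_inner a b has_integral complex_of_real (2 * C0)) UNIV"
proof (subst has_integral_alt', intro conjI allI impI)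
  show "(\<lambda>x. if x \<in> UNIV then tau_inner a b x else 0) integrable_on cbox u v" for u v
    using integrable_continuous[OF continuous_on_subset[OF tau_cont]] by simp
  fix e :: real assume e: "0 < e"
  have "eventually (\<lambda>t. dist (Fc t) (complex_of_real C0) < e/2) at_top"
    using tendstoD[OF Fc_lim, of "e/2"] e by simp
  then obtain B0 where B0: "\<And>t. t \<ge> B0 \<Longrightarrow> dist (Fc t) (complex_of_real C0) < e/2"
    by (auto simp: eventually_at_top_linorder)
  define B where "B = max B0 1"
  have B: "0 < B" by (simp add: B_def)
  show "\<exists>B>0. \<forall>u v. ball 0 B \<subseteq> cbox u v \<longrightarrow>
          norm (integral (cbox u v) (\<lambda>x. if x \<in> UNIV then tau_inner a b x else 0) - complex_of_real (2 * C0)) < e"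
  proof (intro exI[of _ B] conjI allI impI B)
    fix u v :: real assume sub: "ball 0 B \<subseteq> cbox u v"
    have uv: "u \<le> -B" "B \<le> v" using ball_sub_real[OF sub B] by auto
    have int: "tau_inner a b integrable_on {u..v}"
      using integrable_continuous_real[OF continuous_on_subset[OF tau_cont]] by simp
    have "integral {u..0} (tau_inner a b) + integral {0..v} (tau_inner a b) = integral {u..v} (tau_inner a b)"
      using Henstock_Kurzweil_Integration.integral_combine[OF _ _ int, of 0] uv B by auto
    then have "integral {u..v} (tau_inner a b) = integral {u..0} (tau_inner a b) + integral {0..v} (tau_inner a b)"
      by simp
    also have "integral {u..0} (tau_inner a b) = integral {-0..-u} (\<lambda>x. tau_inner a b (-x))"
      using Henstock_Kurzweil_Integration.integral_reflect_real[where f="tau_inner a b" and a=u and b=0] by simp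
    also have "\<dots> = Fc (-u)" by (simp add: Fc_def tau_even)
    finally have eq: "integral {u..v} (tau_inner a b) = Fc (-u) + Fc v" by (simp add: Fc_def)
    have d1: "norm (Fc (-u) - complex_of_real C0) < e/2" using B0[of "-u"] uv B by (auto simp: B_def dist_norm)
    have d2: "norm (Fc v - complex_of_real C0) < e/2" using B0[of v] uv B by (auto simp: B_def dist_norm)
    have "norm (Fc (-u) + Fc v - complex_of_real (2 * C0)) \<le> norm (Fc (-u) - complex_of_real C0) + norm (Fc v - complex_of_real C0)"
      by (rule order_trans[OF _ norm_triangle_ineq]) (simp add: algebra_simps)
    then show "norm (integral (cbox u v) (\<lambda>x. if x \<in> UNIV then tau_inner a b x else 0) - complex_of_real (2 * C0)) < e"
      using d1 d2 eq by (simp add: box_real)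
  qed
qed

lemma tau_infty_val: "tau_infty a b = complex_of_real (2 * C0)"
  unfolding tau_infty_def by (rule integral_unique[OF tau_has_integral])

end


theorem lemma8p1:
  fixes a b :: "4 \<Rightarrow> int" and Y1 Y2 :: real
  assumes coprime: "\<And>i. gcd (a i) (b i) = 1"
    and nonprop: "\<And>i j. i \<noteq> j \<Longrightarrow> a i * b j - a j * b i \<noteq> 0"
    and no_real_points: "\<And>y::real^4. Q1 a y = 0 \<Longrightarrow> Q2 b y = 0 \<Longrightarrow> y = 0"
    and Y1: "1 \<le> Y1" and Y12: "Y1 < Y2"
  shows "((\<lambda>y::real^4. complex_of_real
             (1 / ((supnorm4 y)^2 * max \<bar>Q1 a y\<bar> \<bar>Q2 b y\<bar>)))
          has_integral (tau_infty a b * of_real (ln (Y2 / Y1))))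
         {y. Y1 \<le> supnorm4 y \<and> supnorm4 y < Y2}"
proof -
  interpret S: setting a b using no_real_points by unfold_locales
  have Y0: "0 < Y1" using Y1 by linarith
  have "(S.hh has_integral 2 * S.C0 * ln (Y2/Y1)) (shell Y1 Y2)" by (rule S.shell_value[OF Y0 Y12])
  then have I: "((\<lambda>y. complex_of_real (S.hh y)) has_integral complex_of_real (2 * S.C0 * ln (Y2/Y1))) (shell Y1 Y2)"
    by (rule has_integral_of_real)
  have F: "(\<lambda>y. complex_of_real (S.hh y)) = (\<lambda>y::real^4. complex_of_real (1 / ((supnorm4 y)^2 * max \<bar>Q1 a y\<bar> \<bar>Q2 b y\<bar>)))"
    by (simp add: S.hh_def S.Mf_def)
  have V: "complex_of_real (2 * S.C0 * ln (Y2/Y1)) = tau_infty a b * of_real (ln (Y2/Y1))"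
    by (simp add: S.tau_infty_val)
  have Sh: "shell Y1 Y2 = {y. Y1 \<le> supnorm4 y \<and> supnorm4 y < Y2}" by (simp add: shell_def)
  show ?thesis using I unfolding F V Sh .
qed

end
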